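(* Let $a_{12},a_{34},d>0$ with $d>\max\{a_{12},a_{34}\}$, and consider the isosceles trapezium with vertices $A_1'=(-a_{12}/2,\,d)$, $A_2'=(a_{12}/2,\,d)$, $A_4=(-a_{34}/2,\,0)$, $A_3=(a_{34}/2,\,0)$; let $M_{12}=(0,d)$, $M_{34}=(0,0)$. Let $F$ be the intersection of the diagonals $A_1'A_3$, $A_2'A_4$ and $\theta=\angle A_1'FA_2'$. Let $F_{12}$ be the orthocenter of triangle $A_1'FA_2'$, $F_{34}$ the orthocenter of triangle $A_4FA_3$, $w(\theta)=2\sin\frac{\theta}{2}$, and $$l_{minT}=2|A_1'F_{12}|+2|A_3F_{34}|+w(\theta)|F_{12}F_{34}|.$$ Let $O_{12},O_{34}$ be the points on segment $M_{12}M_{34}$ with $\angle A_1'O_{12}A_2'=120^\circ$ and $\angle A_4O_{34}A_3=120^\circ$, and $$l_{minST}=2|A_1'O_{12}|+2|A_3O_{34}|+|O_{12}O_{34}|.$$ If $0<\theta<60^\circ$, then $l_{minT}<l_{minST}$; and if $60^\circ<\theta<90^\circ$, then $l_{minT}>l_{minST}$.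
   Context: $|XY|$ denotes Euclidean distance. $l_{minST}$ is the length of the full (unweighted) Steiner tree of the trapezium with Steiner points $O_{12},O_{34}$; $l_{minT}$ is the weighted length of the paper's "construction tree" with interior points $F_{12},F_{34}$ carrying weight $w(\theta)$ on the segment $F_{12}F_{34}$. *)

theory Defs
  imports "HOL-Analysis.Analysis"
begin

definition vangle :: "'a::real_inner \<Rightarrow> 'a \<Rightarrow> real" where
  "vangle u v = arccos ((u \<bullet> v) / (norm u * norm v))"

definition angle :: "'a::real_inner \<Rightarrow> 'a \<Rightarrow> 'a \<Rightarrow> real" where
  "angle a b c = vangle (a - b) (c - b)"

definition is_orthocenter :: "'a::real_inner \<Rightarrow> 'a \<Rightarrow> 'a \<Rightarrow> 'a \<Rightarrow> bool" where
  "is_orthocenter H A B C \<longleftrightarrow>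
     (H - A) \<bullet> (B - C) = 0 \<and> (H - B) \<bullet> (A - C) = 0 \<and> (H - C) \<bullet> (A - B) = 0"

end

theory Submission
  imports Defs
begin

lemma ang_sym:
  fixes p ox py oy :: real
  assumes "p > 0"
  shows "angle (ox - p, py) (ox, oy) (ox + p, py) = arccos (((py-oy)^2 - p^2)/((py-oy)^2 + p^2))"
proof -
  have n: "norm (- p, py - oy) = sqrt (p^2 + (py-oy)^2)" "norm (p, py - oy) = sqrt (p^2 + (py-oy)^2)"
    by (simp_all add: norm_Pair)
  have "sqrt (p^2 + (py-oy)^2) * sqrt (p^2 + (py-oy)^2) = p^2 + (py-oy)^2"
    by (simp add: add_nonneg_nonneg)
  then show ?thesis unfolding angle_def vangle_def using n
    by (simp add: power2_eq_square algebra_simps)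
qed

lemma ratio_bounds:
  fixes q p :: real
  assumes "q \<ge> 0" "p > 0"
  shows "-1 \<le> (q - p)/(q + p)" "(q - p)/(q + p) \<le> 1"
  using assms by (auto simp: field_simps)

lemma cos_2pi3: "cos (2 * pi / 3) = - 1/2"
proof -
  have "2 * pi / 3 = pi - pi / 3" by simp
  then have "cos (2 * pi / 3) = cos (pi - pi / 3)" by simp
  also have "... = - cos (pi / 3)" by (rule cos_pi_minus)
  finally show ?thesis by (simp add: cos_60)
qed

lemma Q_neg:
  fixes x :: real assumes "0 \<le> x" "x^2 \<le> 3"
  shows "x^3 + 3*(x^2) - 9*x - 3 < 0"
proof -
  have c: "x*x*x \<le> 3*x" using assms by (intro mult_right_mono) (auto simp: power2_eq_square)
  have "x < 2"
  proof (rule ccontr)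
    assume "\<not> x < 2"
    then have "2*2 \<le> x*x" by (intro mult_mono) auto
    then show False using assms by (simp add: power2_eq_square)
  qed
  then have "x*x \<le> 2*x" using assms by (intro mult_right_mono) auto
  then have "x*x*x + 3*(x*x) - 9*x - 3 < 0" using c by linarith
  then show ?thesis by (simp add: power3_eq_cube power2_eq_square)
qed

lemma poly_id:
  fixes s t :: real assumes "3*t^2 = s^2"
  shows "3*((1+s)^2*(1+t^2) - 16*t^2) = (s-1)*(s^3+3 * (s^2)-9 * s-3)"
proof -
  have "3*((1+s)^2*(1+t^2) - 16*t^2) = 3*(1+s)^2 + (1+s)^2*(3*t^2) - 16*(3*t^2)"
    by (simp add: algebra_simps)
  also have "... = 3*(1+s)^2 + (1+s)^2*(s^2) - 16*(s^2)" using assms by simp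
  also have "... = (s-1)*(s^3+3 * (s^2)-9 * s-3)" by (simp add: algebra_simps power2_eq_square power3_eq_cube)
  finally show ?thesis .
qed

lemma O_solve:
  fixes p e :: real
  assumes p: "p > 0" and e: "e \<ge> 0" and ang: "arccos ((e^2 - p^2)/(e^2+p^2)) = 2*pi/3"
  shows "e = p / sqrt 3"
proof -
  have b: "-1 \<le> (e^2 - p^2)/(e^2+p^2)" "(e^2 - p^2)/(e^2+p^2) \<le> 1"
    using ratio_bounds[of "e^2" "p^2"] p by auto
  have "cos (arccos ((e^2 - p^2)/(e^2+p^2))) = cos (2*pi/3)" by (simp only: ang)
  then have "(e^2 - p^2)/(e^2+p^2) = cos (2*pi/3)" using cos_arccos[OF b] by simp
  then have "(e^2 - p^2)/(e^2+p^2) = -1/2" by (simp add: cos_2pi3)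
  moreover have "e^2 + p^2 > 0" using p by (simp add: add_nonneg_pos)
  moreover have "e^2 - p^2 = ((e^2 - p^2)/(e^2+p^2)) * (e^2+p^2)" using p by simp
  ultimately have "e^2 - p^2 = -1/2 * (e^2+p^2)" by simp
  then have "2*(e^2 - p^2) = -(e^2+p^2)" by (simp add: algebra_simps)
  then have "3*e^2 = p^2" by (simp add: algebra_simps)
  moreover have "(p / sqrt 3)^2 = p^2/3" by (simp add: power_divide)
  ultimately have eq: "e^2 = (p / sqrt 3)^2" by simp
  have nn: "0 \<le> p / sqrt 3" using p by simp
  show ?thesis using power2_eq_imp_eq[OF eq e nn] .
qed

lemma sq_helper:
  fixes c t :: real assumes "c \<ge> 0"
  shows "sqrt (c^2 + (c*t)^2) = c * sqrt (1 + t^2)"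
proof -
  have "c^2 + (c*t)^2 = c^2 * (1+t^2)" by (simp add: algebra_simps power2_eq_square)
  then show ?thesis using assms by (simp add: real_sqrt_mult)
qed

lemma dist_pts: "dist (x1::real, y1::real) (x2, y2) = sqrt ((x1-x2)^2 + (y1-y2)^2)"
  by (simp add: dist_Pair_Pair dist_real_def)

lemma seg_pt:
  fixes F P Q :: "real \<times> real"
  assumes "F \<in> closed_segment P Q"
  shows "\<exists>u. 0 \<le> u \<and> u \<le> 1 \<and> fst F = (1-u)* fst P + u * fst Q \<and> snd F = (1-u)* snd P + u * snd Q"
  using assms unfolding in_segment by auto

theorem theorem3:
  fixes a12 a34 d :: real
    and A1 A2 A3 A4 M12 M34 F F12 F34 O12 O34 :: "real \<times> real"
  assumes pos: "a12 > 0" "a34 > 0" "d > 0"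
    and dmax: "d > max a12 a34"
    and A1_def: "A1 = (- a12 / 2, d)"
    and A2_def: "A2 = (a12 / 2, d)"
    and A4_def: "A4 = (- a34 / 2, 0)"
    and A3_def: "A3 = (a34 / 2, 0)"
    and M12_def: "M12 = (0, d)"
    and M34_def: "M34 = (0, 0)"
    and F: "F \<in> closed_segment A1 A3" "F \<in> closed_segment A2 A4"
    and F12: "is_orthocenter F12 A1 F A2"
    and F34: "is_orthocenter F34 A4 F A3"
    and O12: "O12 \<in> closed_segment M12 M34" "angle A1 O12 A2 = 2 * pi / 3"
    and O34: "O34 \<in> closed_segment M12 M34" "angle A4 O34 A3 = 2 * pi / 3"
  shows "let \<theta> = angle A1 F A2;
             w = 2 * sin (\<theta> / 2);
             lminT = 2 * dist A1 F12 + 2 * dist A3 F34 + w * dist F12 F34;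
             lminST = 2 * dist A1 O12 + 2 * dist A3 O34 + dist O12 O34
         in (0 < \<theta> \<and> \<theta> < pi / 3 \<longrightarrow> lminT < lminST) \<and>
            (pi / 3 < \<theta> \<and> \<theta> < pi / 2 \<longrightarrow> lminT > lminST)"
proof -
  define a where "a = a12"
  define b where "b = a34"
  have a: "a > 0" and b: "b > 0" and dp: "d > 0" using pos by (simp_all add: a_def b_def)
  have ad: "a < d" and bd: "b < d" using dmax by (simp_all add: a_def b_def)
  define t where "t = (a+b)/(2*d)"
  have t0: "t > 0" and t1: "t < 1" using a b ad bd dp by (simp_all add: t_def field_simps)
  have abt: "a + b = 2*d*t" using dp by (simp add: t_def)
  define k where "k = a/(2*t)"
  define h where "h = b/(2*t)"
  have hk: "h + k = d" using t0 abt dp by (simp add: h_def k_def field_simps)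
  have k0: "k > 0" and h0: "h > 0" using a b t0 by (simp_all add: k_def h_def)
  obtain u where u: "0 \<le> u" "u \<le> 1" "fst F = (1-u)*(-a/2) + u * (b/2)" "snd F = (1-u)*d"
    using seg_pt[OF F(1)] A1_def A3_def a_def b_def by auto
  obtain v where v: "0 \<le> v" "v \<le> 1" "fst F = (1-v)*(a/2) + v * (-b/2)" "snd F = (1-v)*d"
    using seg_pt[OF F(2)] A2_def A4_def a_def b_def by auto
  have uv: "u = v" using u(4) v(4) dp by simp
  have ua: "u * (a+b) = a" using u(3) v(3) uv by (simp add: algebra_simps)
  have Fx: "fst F = 0" using u(3) ua by (simp add: field_simps; linarith)
  have "(1-u)*(a+b) = b" using ua by (simp add: algebra_simps)
  then have "(1-u)*d*(2*t) = b" using abt by (simp add: algebra_simps)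
  then have "(1-u)*d = h" using t0 by (simp add: h_def field_simps)
  then have Fe: "F = (0, h)" using Fx u(4) by (simp add: prod_eq_iff)
  obtain x1 y1 where P12: "F12 = (x1, y1)" by (cases F12)
  have o12: "(x1 + a/2) * (0 - a/2) + (y1 - d) * (h - d) = 0" "x1 * (-a) = 0"
    using F12 unfolding is_orthocenter_def
    by (simp_all add: Fe P12 A1_def A2_def a_def[symmetric] algebra_simps)
  have x1: "x1 = 0" using o12(2) a by simp
  have kd: "k = d - h" using hk by simp
  have "(d - y1) * k = a^2/4" using o12(1) x1 unfolding kd by (simp add: algebra_simps power2_eq_square)
  then have "a * (d - y1) = a * (a*t/2)" using t0 by (simp add: k_def field_simps power2_eq_square)
  then have "d - y1 = a*t/2" using a by simp
  then have F12e: "F12 = (0, d - a*t/2)" using P12 x1 by simp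
  obtain x2 y2 where P34: "F34 = (x2, y2)" by (cases F34)
  have o34: "(x2 + b/2) * (0 - b/2) + y2 * h = 0" "x2 * (-b) = 0"
    using F34 unfolding is_orthocenter_def
    by (simp_all add: Fe P34 A4_def A3_def b_def[symmetric] algebra_simps)
  have x2: "x2 = 0" using o34(2) b by simp
  have "y2 * h = b^2/4" using o34(1) x2 by (simp add: algebra_simps power2_eq_square)
  then have "b * y2 = b * (b*t/2)" using t0 by (simp add: h_def field_simps power2_eq_square)
  then have "y2 = b*t/2" using b by simp
  then have F34e: "F34 = (0, b*t/2)" using P34 x2 by simp
  obtain u1 where u1: "0 \<le> u1" "u1 \<le> 1" "fst O12 = 0" "snd O12 = (1-u1)*d"
    using seg_pt[OF O12(1)] M12_def M34_def by auto
  define y3 where "y3 = (1-u1)*d"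
  have O12e0: "O12 = (0, y3)" using u1 by (simp add: prod_eq_iff y3_def)
  have "d - y3 \<ge> 0" using u1 dp by (simp add: y3_def algebra_simps)
  moreover have "arccos (((d - y3)^2 - (a/2)^2)/((d - y3)^2 + (a/2)^2)) = 2*pi/3"
  proof -
    have "A1 = (0 - a/2, d)" "A2 = (0 + a/2, d)" using A1_def A2_def a_def by auto
    then show ?thesis using O12(2) ang_sym[of "a/2" 0 d y3] a O12e0 by simp
  qed
  ultimately have "d - y3 = (a/2) / sqrt 3" using O_solve[of "a/2" "d - y3"] a by simp
  then have O12e: "O12 = (0, d - a/(2 * sqrt 3))" using O12e0 by simp
  obtain u2 where u2: "0 \<le> u2" "u2 \<le> 1" "fst O34 = 0" "snd O34 = (1-u2)*d"
    using seg_pt[OF O34(1)] M12_def M34_def by auto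
  define y4 where "y4 = (1-u2)*d"
  have O34e0: "O34 = (0, y4)" using u2 by (simp add: prod_eq_iff y4_def)
  have "y4 \<ge> 0" using u2 dp by (simp add: y4_def)
  moreover have "arccos ((y4^2 - (b/2)^2)/(y4^2 + (b/2)^2)) = 2*pi/3"
  proof -
    have "A4 = (0 - b/2, 0)" "A3 = (0 + b/2, 0)" using A4_def A3_def b_def by auto
    then show ?thesis using O34(2) ang_sym[of "b/2" 0 0 y4] b O34e0 by simp
  qed
  ultimately have "y4 = (b/2) / sqrt 3" using O_solve[of "b/2" y4] b by simp
  then have O34e: "O34 = (0, b/(2 * sqrt 3))" using O34e0 by simp
  define r where "r = sqrt 3"
  have r0: "r > 0" and r2: "r^2 = 3" by (simp_all add: r_def)
  define S where "S = sqrt (1 + t^2)"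
  have S0: "S > 0" and S2: "S^2 = 1 + t^2" by (simp_all add: S_def add_pos_nonneg)
  have "dist A1 F12 = sqrt ((-a/2 - 0)^2 + (d - (d - a*t/2))^2)"
    by (simp only: dist_pts A1_def F12e a_def)
  also have "(-a/2 - 0)^2 + (d - (d - a*t/2))^2 = (a/2)^2 + ((a/2)*t)^2"
    by (simp add: power2_eq_square algebra_simps)
  also have "sqrt ((a/2)^2 + ((a/2)*t)^2) = a/2 * S" using a sq_helper[of "a/2" t] by (simp add: S_def)
  finally have d1: "dist A1 F12 = a/2 * S" .
  have "dist A3 F34 = sqrt ((b/2 - 0)^2 + (0 - b*t/2)^2)"
    by (simp only: dist_pts A3_def F34e b_def)
  also have "(b/2 - 0)^2 + (0 - b*t/2)^2 = (b/2)^2 + ((b/2)*t)^2"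
    by (simp add: power2_eq_square algebra_simps)
  also have "sqrt ((b/2)^2 + ((b/2)*t)^2) = b/2 * S" using b sq_helper[of "b/2" t] by (simp add: S_def)
  finally have d2: "dist A3 F34 = b/2 * S" .
  have "dist F12 F34 = sqrt ((0 - 0)^2 + (d - a*t/2 - b*t/2)^2)"
    by (simp only: dist_pts F12e F34e)
  also have "... = \<bar>d - a*t/2 - b*t/2\<bar>" by simp
  also have "d - a*t/2 - b*t/2 = d * (1 - t^2)"
  proof -
    have "a*t/2 + b*t/2 = (a+b)*t/2" by (simp add: algebra_simps)
    also have "... = d*t^2" by (simp add: abt power2_eq_square)
    finally show ?thesis by (simp add: algebra_simps)
  qed
  also have "\<bar>d * (1 - t^2)\<bar> = d * (1 - t^2)"
  proof -
    have "t*t < 1*1" using t0 t1 by (intro mult_strict_mono) auto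
    then show ?thesis using dp by (simp add: power2_eq_square)
  qed
  finally have d3: "dist F12 F34 = d * (1 - t^2)" .
  have O12r: "O12 = (0, d - a/(2*r))" using O12e by (simp add: r_def)
  have O34r: "O34 = (0, b/(2*r))" using O34e by (simp add: r_def)
  have "dist A1 O12 = sqrt ((-a/2 - 0)^2 + (d - (d - a/(2*r)))^2)"
    by (simp only: dist_pts A1_def O12r a_def)
  also have "(-a/2 - 0)^2 + (d - (d - a/(2*r)))^2 = (a/r)^2"
    using r0 r2 by (simp add: power_divide power_mult_distrib)
  also have "sqrt ((a/r)^2) = a/r" using a r0 by simp
  finally have d4: "dist A1 O12 = a / r" .
  have "dist A3 O34 = sqrt ((b/2 - 0)^2 + (0 - b/(2*r))^2)"
    by (simp only: dist_pts A3_def O34r b_def)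
  also have "(b/2 - 0)^2 + (0 - b/(2*r))^2 = (b/r)^2"
    using r0 r2 by (simp add: power_divide power_mult_distrib)
  also have "sqrt ((b/r)^2) = b/r" using b r0 by simp
  finally have d5: "dist A3 O34 = b / r" .
  have "dist O12 O34 = sqrt ((0 - 0)^2 + (d - a/(2*r) - b/(2*r))^2)"
    by (simp only: dist_pts O12r O34r)
  also have "... = \<bar>d - a/(2*r) - b/(2*r)\<bar>" by simp
  also have "d - a/(2*r) - b/(2*r) = d - d*t/r"
  proof -
    have "a/(2*r) + b/(2*r) = (a+b)/(2*r)" by (simp add: add_divide_distrib)
    also have "... = d*t/r" using abt r0 by simp
    finally show ?thesis by linarith
  qed
  also have "\<bar>d - d*t/r\<bar> = d - d*t/r"
  proof -
    have "r > 1" using r_def by simp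
    then have "t/r < 1" using t0 t1 by (simp add: field_simps)
    then have "d*(t/r) < d*1" using dp by (intro mult_strict_left_mono) auto
    then show "\<bar>d - d*t/r\<bar> = d - d*t/r" by simp
  qed
  finally have d6: "dist O12 O34 = d - d*t/r" .
  define \<theta> where "\<theta> = angle A1 F A2"
  have A1': "A1 = (0 - a/2, d)" and A2': "A2 = (0 + a/2, d)" using A1_def A2_def a_def by auto
  have "angle (0 - a/2, d) (0, h) (0 + a/2, d) = arccos (((d - h)^2 - (a/2)^2)/((d - h)^2 + (a/2)^2))"
    by (rule ang_sym) (use a in simp)
  then have th1: "\<theta> = arccos (((d - h)^2 - (a/2)^2)/((d - h)^2 + (a/2)^2))"
    by (simp only: \<theta>_def A1' A2' Fe)
  have kt: "a/2 = k*t" using t0 by (simp add: k_def)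
  have dh: "d - h = k" using hk by simp
  have tt: "1 + t^2 > 0" by (simp add: add_pos_nonneg)
  define c where "c = (1 - t^2)/(1 + t^2)"
  have "((d - h)^2 - (a/2)^2)/((d - h)^2 + (a/2)^2) = (k^2*(1 - t^2))/(k^2*(1 + t^2))"
    by (simp only: dh kt power_mult_distrib algebra_simps mult_1_left mult_1_right)
  also have "... = c" using k0 by (simp add: c_def)
  finally have thc: "\<theta> = arccos c" using th1 by simp
  have cb: "-1 \<le> c" "c \<le> 1" using ratio_bounds[of 1 "t^2"] t0 by (simp_all add: c_def)
  have cos_th: "cos \<theta> = c" using thc cb by simp
  have th0: "0 \<le> \<theta>" and thpi: "\<theta> \<le> pi" using thc cb arccos_lbound arccos_ubound by auto
  define w where "w = 2 * sin (\<theta>/2)"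
  have w0: "w \<ge> 0" using th0 thpi by (simp add: w_def sin_ge_zero)
  have "cos (2 * (\<theta>/2)) = 1 - 2 * sin (\<theta>/2) ^ 2" by (rule cos_double_sin)
  then have "c = 1 - 2 * sin (\<theta>/2) ^ 2" using cos_th by simp
  then have w2: "w^2 = 2 * (1 - c)" by (simp add: w_def power_mult_distrib)
  have h1: "(1 - c) * (1 + t^2) = 2 * t^2"
  proof -
    have "c * (1 + t^2) = 1 - t^2" using tt by (simp add: c_def)
    then show ?thesis by (simp add: algebra_simps)
  qed
  have "(w*S)^2 = w^2 * S^2" by (simp add: power_mult_distrib)
  also have "... = 2 * ((1 - c) * (1 + t^2))" by (simp add: w2 S2)
  also have "... = (2*t)^2" by (simp add: h1 power_mult_distrib)
  finally have "(w*S)^2 = (2*t)^2" .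
  moreover have "0 \<le> w*S" using w0 S0 by simp
  moreover have "0 \<le> 2*t" using t0 by simp
  ultimately have wS: "w*S = 2*t" by (rule power2_eq_imp_eq)
  define LT where "LT = 2 * dist A1 F12 + 2 * dist A3 F34 + w * dist F12 F34"
  define LS where "LS = 2 * dist A1 O12 + 2 * dist A3 O34 + dist O12 O34"
  have "LT * S = (a+b)*S^2 + (w*S)*(d*(1-t^2))"
    by (simp add: LT_def d1 d2 d3 algebra_simps power2_eq_square)
  also have "... = 2*d*t*(1+t^2) + 2*t*(d*(1-t^2))" by (simp only: abt S2 wS)
  also have "... = d * (4*t)" by (simp add: algebra_simps)
  finally have LTS: "LT * S = d * (4*t)" .
  define s where "s = r * t"
  have s0: "s > 0" using r0 t0 by (simp add: s_def)
  have s2: "s^2 = 3 * t^2" using r2 by (simp add: s_def power_mult_distrib)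
  have r3: "3 / r = r" using r0 r2 by (simp add: field_simps power2_eq_square)
  have "LS = 2*(a+b)/r + d - d*t/r" by (simp add: LS_def d4 d5 d6 add_divide_distrib)
  also have "... = d + 3*d*t/r" using abt by (simp add: field_simps)
  also have "3*d*t/r = d*t*(3/r)" by simp
  finally have "LS = d + d*t*r" using r3 by simp
  then have LSS: "LS * S = d * ((1+s)*S)" by (simp add: s_def algebra_simps)
  have PI: "3*(((1+s)*S)^2 - (4*t)^2) = (s-1)*(s^3+3 * (s^2)-9 * s-3)"
  proof -
    have "3*(((1+s)*S)^2 - (4*t)^2) = 3*((1+s)^2*(1+t^2) - 16*t^2)"
      by (simp add: power_mult_distrib S2)
    also have "... = (s-1)*(s^3+3 * (s^2)-9 * s-3)" by (rule poly_id) (use s2 in simp)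
    finally show ?thesis .
  qed
  have nnS: "0 \<le> (1+s)*S" using s0 S0 by simp
  have main: "(0 < \<theta> \<and> \<theta> < pi / 3 \<longrightarrow> LT < LS) \<and> (pi / 3 < \<theta> \<and> \<theta> < pi / 2 \<longrightarrow> LT > LS)"
  proof (intro conjI impI)
    assume H: "0 < \<theta> \<and> \<theta> < pi / 3"
    then have "cos (pi/3) < cos \<theta>" by (intro cos_monotone_0_pi) auto
    then have "1/2 < c" using cos_th by (simp add: cos_60)
    then have "1 + t^2 < 2 * (1 - t^2)" using tt by (simp add: c_def field_simps)
    then have "s^2 < 1^2" using s2 by simp
    then have s1: "s < 1" by (rule power_less_imp_less_base) simp
    have "s^2 \<le> 3" using \<open>s^2 < 1^2\<close> by simp
    then have Q: "s^3+3 * (s^2)-9 * s-3 < 0" using s0 by (intro Q_neg) auto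
    have "0 < (s-1)*(s^3+3 * (s^2)-9 * s-3)" using s1 Q by (intro mult_neg_neg) auto
    then have "(4*t)^2 < ((1+s)*S)^2" using PI by simp
    then have "4*t < (1+s)*S" using nnS by (rule power_less_imp_less_base)
    then have "d*(4*t) < d*((1+s)*S)" using dp by simp
    then have "LT * S < LS * S" by (simp only: LTS LSS)
    then show "LT < LS" using S0 by simp
  next
    assume H: "pi / 3 < \<theta> \<and> \<theta> < pi / 2"
    then have "cos \<theta> < cos (pi/3)" using thpi by (intro cos_monotone_0_pi) auto
    then have "c < 1/2" using cos_th by (simp add: cos_60)
    then have "2 * (1 - t^2) < 1 + t^2" using tt by (simp add: c_def field_simps)
    then have "1^2 < s^2" using s2 by simp
    then have s1: "1 < s" by (rule power_less_imp_less_base) (use s0 in simp)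
    have "t*t < 1*1" using t0 t1 by (intro mult_strict_mono) auto
    then have "s^2 \<le> 3" using s2 by (simp add: power2_eq_square)
    then have Q: "s^3+3 * (s^2)-9 * s-3 < 0" using s0 by (intro Q_neg) auto
    have "(s-1)*(s^3+3 * (s^2)-9 * s-3) < 0" using s1 Q by (intro mult_pos_neg) auto
    then have "((1+s)*S)^2 < (4*t)^2" using PI by simp
    moreover have "0 \<le> 4*t" using t0 by simp
    ultimately have "(1+s)*S < 4*t" by (rule power_less_imp_less_base)
    then have "d*((1+s)*S) < d*(4*t)" using dp by simp
    then have "LS * S < LT * S" by (simp only: LTS LSS)
    then show "LT > LS" using S0 by simp
  qed
  show ?thesis unfolding Let_def \<theta>_def[symmetric] w_def[symmetric] LT_def[symmetric] LS_def[symmetric]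
    by (rule main)
qed

end
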